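(* Let $T,\nu,M_t$ be integers with $M_t\ge1$, $\nu\ge0$, and $T>(\nu+1)M_t$; let $\alpha$ be a primitive element of $\mathbb{F}_{2^T}$ and fix $\mathbf{c}\in\mathbb{F}_{2^T}^{M_t\times1}$. If $\mathbf{g}^{(1)},\dots,\mathbf{g}^{(d)}\in\mathcal{G}$ are such that $\Phi(\mathbf{g}^{(1)}),\dots,\Phi(\mathbf{g}^{(d)})$ are linearly independent over $\mathbb{F}_2$, then $\mathbf{g}^{(1)},\dots,\mathbf{g}^{(d)}$ are linearly independent over $\mathbb{F}_{2^T}$.
   Context: $\Gamma=\{\sum_{t=0}^{\nu}\delta_t\alpha^t:\delta_t\in\mathbb{F}_2\}\subseteq\mathbb{F}_{2^T}$. For $\mathbf{g}=[g_0,\dots,g_{M_t-1}]\in\Gamma^{1\times M_t}$ with $g_k=\sum_{j=0}^{\nu}\delta_{k,j}\alpha^j$, $\Phi(\mathbf{g})=[\delta_{0,0},\dots,\delta_{M_t-1,0}]\in\mathbb{F}_2^{1\times M_t}$. $\mathcal{G}=\{\mathbf{g}\in\Gamma^{1\times M_t}:\mathbf{g}\mathbf{c}=0\}$. *)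

theory Defs
  imports Main
begin

text \<open>The field F_(2^T) is an abstract finite field type 'a with CARD('a) = 2^T.
  The prime subfield F_2 is identified with the subset {0,1} of 'a.
  Row vectors of length Mt are functions nat => 'a, only indices k < Mt matter.\<close>

definition primitive_elem :: "'a::{field,finite} \<Rightarrow> bool" where
  "primitive_elem \<alpha> \<longleftrightarrow> \<alpha> \<noteq> 0 \<and> (\<forall>x. x \<noteq> 0 \<longrightarrow> (\<exists>n::nat. x = \<alpha> ^ n))"

definition Gamma :: "nat \<Rightarrow> 'a::field \<Rightarrow> 'a set" where
  "Gamma \<nu> \<alpha> = {(\<Sum>t\<le>\<nu>. \<delta> t * \<alpha> ^ t) | \<delta>. \<forall>t. \<delta> t \<in> {0, 1}}"

definition Phi :: "nat \<Rightarrow> 'a::field \<Rightarrow> (nat \<Rightarrow> 'a) \<Rightarrow> (nat \<Rightarrow> 'a)" where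
  "Phi \<nu> \<alpha> g = (\<lambda>k. THE b. \<exists>\<delta>. (\<forall>t. \<delta> t \<in> {0, 1}) \<and> \<delta> 0 = b \<and>
                                 g k = (\<Sum>t\<le>\<nu>. \<delta> t * \<alpha> ^ t))"

definition calG :: "nat \<Rightarrow> nat \<Rightarrow> 'a::field \<Rightarrow> (nat \<Rightarrow> 'a) \<Rightarrow> (nat \<Rightarrow> 'a) set" where
  "calG Mt \<nu> \<alpha> c = {g. (\<forall>k<Mt. g k \<in> Gamma \<nu> \<alpha>) \<and> (\<Sum>k<Mt. g k * c k) = 0}"

text \<open>Linear independence of the family v_0..v_(d-1) of length-Mt vectors,
  with coefficients ranging over the set K (K = {0,1} for F_2, K = UNIV for F_(2^T)).\<close>
definition lin_indep_over :: "'a::field set \<Rightarrow> nat \<Rightarrow> nat \<Rightarrow> (nat \<Rightarrow> nat \<Rightarrow> 'a) \<Rightarrow> bool" where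
  "lin_indep_over K Mt d v \<longleftrightarrow>
     (\<forall>a. (\<forall>i<d. a i \<in> K) \<and> (\<forall>k<Mt. (\<Sum>i<d. a i * v i k) = 0) \<longrightarrow> (\<forall>i<d. a i = 0))"

end

theory Submission
  imports Defs "HOL-Computational_Algebra.Polynomial" "HOL-Library.FuncSet"
begin

lemma char2_of_card:
  assumes "card (UNIV :: 'a::{field,finite} set) = 2 ^ T" and "T \<ge> 1"
  shows "(1::'a) + 1 = 0"
proof -
  have "(\<Sum>x\<in>(UNIV::'a set). x) = (\<Sum>x\<in>UNIV. x + 1)"
  proof -
    have "inj (\<lambda>x::'a. x + 1)" by (auto simp: inj_def)
    moreover have "range (\<lambda>x::'a. x + 1) = UNIV"
      by (rule surjI[where f="\<lambda>x. x - 1"]) simp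
    ultimately show ?thesis
      using sum.reindex[of "\<lambda>x::'a. x + 1" UNIV "\<lambda>x. x"] by simp
  qed
  also have "\<dots> = (\<Sum>x\<in>UNIV. x) + of_nat (card (UNIV::'a set))"
    by (simp add: sum.distrib)
  finally have "of_nat (card (UNIV::'a set)) = (0::'a)" by simp
  hence "(of_nat 2 :: 'a) ^ T = 0" using assms(1) by (simp add: of_nat_power)
  hence "(of_nat 2 :: 'a) = 0" by simp
  thus ?thesis by (simp add: one_add_one)
qed

lemma B_add: "(1::'a::field) + 1 = 0 \<Longrightarrow> x \<in> {0,1} \<Longrightarrow> y \<in> {0,1} \<Longrightarrow> x + y \<in> {0,1::'a}"
  by auto
lemma B_diff: "(1::'a::field) + 1 = 0 \<Longrightarrow> x \<in> {0,1} \<Longrightarrow> y \<in> {0,1} \<Longrightarrow> x - y \<in> {0,1::'a}"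
proof -
  assume c2: "(1::'a) + 1 = 0" and "x \<in> {0,1}" "y \<in> {0,1}"
  have m: "-(1::'a) = 1" using c2 by (metis add.inverse_unique)
  show ?thesis using \<open>x \<in> {0,1}\<close> \<open>y \<in> {0,1}\<close> m by auto
qed
lemma B_mult: "x \<in> {0,1} \<Longrightarrow> y \<in> {0,1} \<Longrightarrow> x * y \<in> {0,1::'a::field}"
  by auto
lemma B_sum: "(1::'a::field) + 1 = 0 \<Longrightarrow> (\<And>i. i \<in> A \<Longrightarrow> f i \<in> {0,1}) \<Longrightarrow> sum f A \<in> {0,1::'a}"
proof (induction A rule: infinite_finite_induct)
  case (insert x F)
  then show ?case using B_add[of "f x" "sum f F"] by auto
qed auto

definition inB :: "'a::field poly \<Rightarrow> bool" where
  "inB p \<longleftrightarrow> (\<forall>t. coeff p t \<in> {0,1})"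

lemma inB_diff: "(1::'a::field) + 1 = 0 \<Longrightarrow> inB p \<Longrightarrow> inB q \<Longrightarrow> inB (p - q :: 'a poly)"
  unfolding inB_def coeff_diff by (intro allI B_diff) auto
lemma inB_mult: "(1::'a::field) + 1 = 0 \<Longrightarrow> inB p \<Longrightarrow> inB q \<Longrightarrow> inB (p * q :: 'a poly)"
proof -
  assume c2: "(1::'a) + 1 = 0" and p: "inB p" and q: "inB q"
  show ?thesis unfolding inB_def coeff_mult
  proof
    fix t
    show "(\<Sum>i\<le>t. coeff p i * coeff q (t - i)) \<in> {0,1}"
      by (rule B_sum[OF c2], rule B_mult) (use p q in \<open>auto simp: inB_def\<close>)
  qed
qed
lemma inB_sum: "(1::'a::field) + 1 = 0 \<Longrightarrow> (\<And>i. i \<in> A \<Longrightarrow> inB (f i)) \<Longrightarrow> inB (sum f A :: 'a poly)"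
  unfolding inB_def coeff_sum by (intro allI B_sum) auto
lemma inB_monom: "c \<in> {0,1} \<Longrightarrow> inB (monom (c::'a::field) n)"
  unfolding inB_def by (auto simp: coeff_monom)

lemma poly_lt: fixes q :: "'a::field poly" assumes "\<forall>t\<ge>m. coeff q t = 0"
  shows "poly q x = (\<Sum>t<m. coeff q t * x ^ t)"
proof -
  have "poly q x = (\<Sum>t\<le>degree q. coeff q t * x ^ t)" by (rule poly_altdef)
  also have "\<dots> = (\<Sum>t<max m (Suc (degree q)). coeff q t * x ^ t)"
    by (rule sum.mono_neutral_left) (auto simp: coeff_eq_0)
  also have "\<dots> = (\<Sum>t<m. coeff q t * x ^ t)"
    by (rule sum.mono_neutral_right) (use assms in auto)
  finally show ?thesis .
qed

lemma claimE:
  fixes \<alpha> :: "'a::{field,finite}"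
  assumes c2: "(1::'a) + 1 = 0" and card: "card (UNIV :: 'a set) = 2 ^ T"
    and prim: "primitive_elem \<alpha>" and B: "inB p" and nz: "p \<noteq> 0" and z: "poly p \<alpha> = 0"
  shows "T \<le> degree p"
proof -
  define m where "m = degree p"
  have lc: "coeff p m = 1" using B nz unfolding inB_def m_def
    by (metis insert_iff leading_coeff_0_iff singletonD)
  have m1: "m \<ge> 1"
  proof (rule ccontr)
    assume "\<not> m \<ge> 1" hence "m = 0" by simp
    hence "poly p \<alpha> = coeff p 0" by (simp add: poly_altdef m_def)
    thus False using z lc \<open>m = 0\<close> by simp
  qed
  define V where "V = {poly q \<alpha> | q. inB q \<and> (\<forall>t\<ge>m. coeff q t = 0)}"
  have pw: "\<alpha> ^ n \<in> V" for n
  proof (induction n)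
    case 0
    have "inB (1::'a poly)" unfolding inB_def by (auto simp: coeff_1) 
    moreover have "\<forall>t\<ge>m. coeff (1::'a poly) t = 0" using m1 by (auto simp: coeff_1)
    ultimately show ?case unfolding V_def by force
  next
    case (Suc n)
    then obtain q where q: "inB q" "\<forall>t\<ge>m. coeff q t = 0" "\<alpha> ^ n = poly q \<alpha>"
      unfolding V_def by auto
    define c where "c = coeff q (m - 1)"
    define r where "r = pCons 0 q - smult c p"
    have cB: "c \<in> {0,1}" using q(1) unfolding inB_def c_def by auto
    have "inB (pCons 0 q)" using q(1) unfolding inB_def by (auto simp: coeff_pCons split: nat.split)
    moreover have "inB (smult c p)" using B cB unfolding inB_def by auto
    ultimately have rB: "inB r" unfolding r_def using inB_diff[OF c2] by blast
    have rc: "\<forall>t\<ge>m. coeff r t = 0"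
    proof (intro allI impI)
      fix t assume t: "t \<ge> m"
      show "coeff r t = 0"
      proof (cases "t = m")
        case True
        then show ?thesis using m1 lc unfolding r_def c_def
          by (cases t) (auto simp: coeff_pCons)
      next
        case False
        hence "coeff p t = 0" using t m_def coeff_eq_0 by (metis le_neq_implies_less)
        moreover have "coeff (pCons 0 q) t = 0" using q(2) t False m1
          by (cases t) (auto simp: coeff_pCons)
        ultimately show ?thesis unfolding r_def by simp
      qed
    qed
    have "poly r \<alpha> = \<alpha> ^ Suc n" unfolding r_def using z q(3) by simp
    then show ?case unfolding V_def
      by (intro CollectI exI[of _ r]) (use rB rc in simp)
  qed
  have "V = UNIV"
  proof -
    have "x \<in> V" for x
    proof (cases "x = 0")
      case True
      have "inB (0::'a poly)" unfolding inB_def by simp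
      then show ?thesis unfolding V_def using True by force
    next
      case False
      then obtain n where "x = \<alpha> ^ n" using prim unfolding primitive_elem_def by blast
      then show ?thesis using pw by simp
    qed
    thus ?thesis by auto
  qed
  moreover have "V \<subseteq> (\<lambda>f. \<Sum>t<m. f t * \<alpha> ^ t) ` (PiE {..<m} (\<lambda>_. {0,1}))"
  proof
    fix x assume "x \<in> V"
    then obtain q where q: "inB q" "\<forall>t\<ge>m. coeff q t = 0" "x = poly q \<alpha>"
      unfolding V_def by auto
    have "x = (\<Sum>t<m. restrict (coeff q) {..<m} t * \<alpha> ^ t)"
      using poly_lt[OF q(2)] q(3) by simp
    moreover have "restrict (coeff q) {..<m} \<in> PiE {..<m} (\<lambda>_. {0,1})"
      using q(1) unfolding inB_def by auto
    ultimately show "x \<in> (\<lambda>f. \<Sum>t<m. f t * \<alpha> ^ t) ` (PiE {..<m} (\<lambda>_. {0,1}))" by blast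
  qed
  ultimately have "UNIV \<subseteq> (\<lambda>f. \<Sum>t<m. f t * \<alpha> ^ t) ` (PiE {..<m} (\<lambda>_. {0,1}))" by simp
  hence "card (UNIV::'a set) \<le> card ((\<lambda>f. \<Sum>t<m. f t * \<alpha> ^ t) ` (PiE {..<m} (\<lambda>_. {0,1::'a})))"
    by (intro card_mono) simp_all
  also have "\<dots> \<le> card (PiE {..<m} (\<lambda>_. {0,1::'a}))" by (rule card_image_le) (simp add: finite_PiE)
  also have "\<dots> = 2 ^ m" by (simp add: card_PiE numeral_2_eq_2)
  finally have "(2::nat) ^ T \<le> 2 ^ m" using card by simp
  thus ?thesis unfolding m_def by simp
qed

lemma uniqB:
  fixes \<alpha> :: "'a::{field,finite}"
  assumes c2: "(1::'a) + 1 = 0" and card: "card (UNIV :: 'a set) = 2 ^ T"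
    and prim: "primitive_elem \<alpha>" and "inB p" "inB q" "degree p < T" "degree q < T"
    and "poly p \<alpha> = poly q \<alpha>"
  shows "p = q"
proof (rule ccontr)
  assume "p \<noteq> q"
  hence "p - q \<noteq> 0" by simp
  moreover have "inB (p - q)" using inB_diff[OF c2] assms by blast
  moreover have "poly (p - q) \<alpha> = 0" using assms by simp
  ultimately have "T \<le> degree (p - q)" using claimE[OF c2 card prim] by blast
  moreover have "degree (p - q) \<le> max (degree p) (degree q)" by (rule degree_diff_le_max)
  ultimately show False using assms by linarith
qed

lemma monsum:
  fixes \<alpha> :: "'a::field"
  assumes "\<forall>t. \<delta> t \<in> {0,1}"
  shows "inB (\<Sum>t\<le>\<nu>. monom (\<delta> t) t)" "degree (\<Sum>t\<le>\<nu>. monom (\<delta> t) t) \<le> \<nu>"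
    "coeff (\<Sum>t\<le>\<nu>. monom (\<delta> t) t) 0 = \<delta> 0"
    "poly (\<Sum>t\<le>\<nu>. monom (\<delta> t) t) \<alpha> = (\<Sum>t\<le>\<nu>. \<delta> t * \<alpha> ^ t)"
proof -
  have co: "coeff (\<Sum>t\<le>\<nu>. monom (\<delta> t) t) s = (if s \<le> \<nu> then \<delta> s else 0)" for s
    by (simp add: coeff_sum coeff_monom)
  show "inB (\<Sum>t\<le>\<nu>. monom (\<delta> t) t)" unfolding inB_def co using assms by auto
  show "degree (\<Sum>t\<le>\<nu>. monom (\<delta> t) t) \<le> \<nu>" by (rule degree_le) (simp add: co)
  show "coeff (\<Sum>t\<le>\<nu>. monom (\<delta> t) t) 0 = \<delta> 0" by (simp add: co)
  show "poly (\<Sum>t\<le>\<nu>. monom (\<delta> t) t) \<alpha> = (\<Sum>t\<le>\<nu>. \<delta> t * \<alpha> ^ t)"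
    by (simp add: poly_sum poly_monom)
qed

lemma Gamma_rep:
  fixes \<alpha> :: "'a::field"
  assumes "x \<in> Gamma \<nu> \<alpha>"
  shows "\<exists>P. inB P \<and> degree P \<le> \<nu> \<and> poly P \<alpha> = x"
proof -
  obtain \<delta> where d: "\<forall>t. \<delta> t \<in> {0,1}" "x = (\<Sum>t\<le>\<nu>. \<delta> t * \<alpha> ^ t)"
    using assms unfolding Gamma_def by blast
  show ?thesis
    by (rule exI[of _ "\<Sum>t\<le>\<nu>. monom (\<delta> t) t"]) (use monsum[OF d(1)] d(2) in simp)
qed

lemma Phi_eq:
  fixes \<alpha> :: "'a::{field,finite}"
  assumes c2: "(1::'a) + 1 = 0" and card: "card (UNIV :: 'a set) = 2 ^ T"
    and prim: "primitive_elem \<alpha>" and nu: "\<nu> < T"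
    and P: "inB P" "degree P \<le> \<nu>" "poly P \<alpha> = h k"
  shows "Phi \<nu> \<alpha> h k = coeff P 0"
  unfolding Phi_def
proof (rule the_equality)
  have cl: "\<forall>t. coeff P t \<in> {0,1}" using P unfolding inB_def by auto
  have "poly P \<alpha> = (\<Sum>t<Suc \<nu>. coeff P t * \<alpha> ^ t)"
    by (rule poly_lt) (use P(2) in \<open>auto intro: coeff_eq_0\<close>)
  hence "h k = (\<Sum>t\<le>\<nu>. coeff P t * \<alpha> ^ t)" using P(3) lessThan_Suc_atMost by simp
  thus "\<exists>\<delta>. (\<forall>t. \<delta> t \<in> {0, 1}) \<and> \<delta> 0 = coeff P 0 \<and> h k = (\<Sum>t\<le>\<nu>. \<delta> t * \<alpha> ^ t)"
    using cl by blast
next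
  fix b assume "\<exists>\<delta>. (\<forall>t. \<delta> t \<in> {0, 1}) \<and> \<delta> 0 = b \<and> h k = (\<Sum>t\<le>\<nu>. \<delta> t * \<alpha> ^ t)"
  then obtain \<delta> where d: "\<forall>t. \<delta> t \<in> {0, 1}" "\<delta> 0 = b" "h k = (\<Sum>t\<le>\<nu>. \<delta> t * \<alpha> ^ t)" by blast
  note M = monsum[OF d(1), where \<nu>=\<nu>]
  have "(\<Sum>t\<le>\<nu>. monom (\<delta> t) t) = P"
    by (rule uniqB[OF c2 card prim]) (use M P nu d in auto)
  thus "b = coeff P 0" using M d by auto
qed

theorem lemma7:
  fixes \<alpha> :: "'a::{field,finite}"
    and T \<nu> Mt d :: nat
    and c :: "nat \<Rightarrow> 'a"
    and g :: "nat \<Rightarrow> nat \<Rightarrow> 'a"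
  assumes "card (UNIV :: 'a set) = 2 ^ T"
    and "Mt \<ge> 1"
    and "T > (\<nu> + 1) * Mt"
    and "primitive_elem \<alpha>"
    and "\<forall>i<d. g i \<in> calG Mt \<nu> \<alpha> c"
    and "lin_indep_over {0, 1} Mt d (\<lambda>i. Phi \<nu> \<alpha> (g i))"
  shows "lin_indep_over UNIV Mt d g"
proof -
  note card = assms(1) and prim = assms(4) and indep = assms(6)
  have nuT: "\<nu> < T"
  proof -
    have "\<nu> + 1 \<le> (\<nu> + 1) * Mt" using mult_le_mono2[OF assms(2), of "\<nu>+1"] by simp
    thus ?thesis using assms(3) by linarith
  qed
  have T1: "T \<ge> 1" using nuT by simp
  have c2: "(1::'a) + 1 = 0" by (rule char2_of_card[OF card T1])
  define P where "P i k = (SOME Q. inB Q \<and> degree Q \<le> \<nu> \<and> poly Q \<alpha> = g i k)" for i k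
  have P: "inB (P i k) \<and> degree (P i k) \<le> \<nu> \<and> poly (P i k) \<alpha> = g i k" if "i < d" "k < Mt" for i k
  proof -
    have "g i k \<in> Gamma \<nu> \<alpha>" using assms(5) that unfolding calG_def by auto
    from Gamma_rep[OF this] show ?thesis unfolding P_def by (rule someI_ex)
  qed
  have PhiP: "Phi \<nu> \<alpha> (g i) k = coeff (P i k) 0" if "i < d" "k < Mt" for i k
    using P[OF that] Phi_eq[OF c2 card prim nuT] by blast
  have spec_ind: "\<forall>i<d. e i = 0" if "\<forall>k<Mt. (\<Sum>i<d. e i * Phi \<nu> \<alpha> (g i) k) = 0"
      "\<forall>i<d. e i \<in> {0,1}" for e
    using indep that unfolding lin_indep_over_def by blast
  have PhiB: "Phi \<nu> \<alpha> (g i) k \<in> {0,1}" if "i < d" "k < Mt" for i k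
    using PhiP[OF that] P[OF that] unfolding inB_def by auto
  have dMt: "d \<le> Mt"
  proof -
    define f where "f a = restrict (\<lambda>k. \<Sum>i<d. a i * Phi \<nu> \<alpha> (g i) k) {..<Mt}" for a :: "nat \<Rightarrow> 'a"
    have inj: "inj_on f (PiE {..<d} (\<lambda>_. {0,1}))"
    proof (rule inj_onI)
      fix a a' assume a: "a \<in> PiE {..<d} (\<lambda>_. {0,1::'a})" and a': "a' \<in> PiE {..<d} (\<lambda>_. {0,1::'a})"
        and eq: "f a = f a'"
      have "\<forall>k<Mt. (\<Sum>i<d. (a i - a' i) * Phi \<nu> \<alpha> (g i) k) = 0"
      proof (intro allI impI)
        fix k assume k: "k < Mt"
        have "f a k = f a' k" using eq by simp
        hence "(\<Sum>i<d. a i * Phi \<nu> \<alpha> (g i) k) = (\<Sum>i<d. a' i * Phi \<nu> \<alpha> (g i) k)"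
          using k unfolding f_def by simp
        thus "(\<Sum>i<d. (a i - a' i) * Phi \<nu> \<alpha> (g i) k) = 0"
          by (simp add: left_diff_distrib sum_subtractf)
      qed
      moreover have "\<forall>i<d. a i - a' i \<in> {0,1}"
        using a a' B_diff[OF c2] by (auto simp: PiE_iff)
      ultimately have "\<forall>i<d. a i - a' i = 0"
        by (rule spec_ind[of "\<lambda>i. a i - a' i"])
      thus "a = a'" using a a'
        by (intro PiE_ext) auto
    qed
    have "f ` (PiE {..<d} (\<lambda>_. {0,1})) \<subseteq> PiE {..<Mt} (\<lambda>_. {0,1})"
    proof
      fix y assume "y \<in> f ` (PiE {..<d} (\<lambda>_. {0,1::'a}))"
      then obtain a where a: "a \<in> PiE {..<d} (\<lambda>_. {0,1::'a})" and y: "y = f a" by blast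
      show "y \<in> PiE {..<Mt} (\<lambda>_. {0,1})" unfolding y f_def
      proof (rule restrict_PiE_iff[THEN iffD2], intro ballI)
        fix k assume k: "k \<in> {..<Mt}"
        show "(\<Sum>i<d. a i * Phi \<nu> \<alpha> (g i) k) \<in> {0,1}"
          by (rule B_sum[OF c2], rule B_mult) (use a k PhiB in \<open>auto simp: PiE_iff\<close>)
      qed
    qed
    hence "card (PiE {..<d} (\<lambda>_. {0,1::'a})) \<le> card (PiE {..<Mt} (\<lambda>_. {0,1::'a}))"
      using card_inj_on_le[OF inj] by (simp add: finite_PiE)
    hence "(2::nat) ^ d \<le> 2 ^ Mt" by (simp add: card_PiE numeral_2_eq_2)
    thus ?thesis by simp
  qed
  have dnu: "d * \<nu> < T"
  proof -
    have "d * \<nu> \<le> Mt * \<nu>" using dMt by simp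
    also have "\<dots> < (\<nu> + 1) * Mt" using assms(2) by (simp add: algebra_simps)
    finally show ?thesis using assms(3) by linarith
  qed
  show ?thesis unfolding lin_indep_over_def
  proof (rule allI, rule impI)
    fix a :: "nat \<Rightarrow> 'a"
    assume H: "(\<forall>i<d. a i \<in> UNIV) \<and> (\<forall>k<Mt. (\<Sum>i<d. a i * g i k) = 0)"
    show "\<forall>i<d. a i = 0"
    proof (rule ccontr)
      assume "\<not> (\<forall>i<d. a i = 0)"
      then obtain j where j: "j < d" "a j \<noteq> 0" by blast
      define a' where "a' i = a i / a j" for i
      have a'j: "a' j = 1" using j unfolding a'_def by simp
      have a'sol: "(\<Sum>i<d. a' i * g i k) = 0" if "k < Mt" for k
      proof -
        have "(\<Sum>i<d. a' i * g i k) = (\<Sum>i<d. a i * g i k) / a j"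
          unfolding a'_def by (simp add: sum_divide_distrib)
        thus ?thesis using H that by simp
      qed
      define D where "D = T - \<nu>"
      have D1: "D \<ge> 1" using nuT unfolding D_def by simp
      define Dom where "Dom = PiE ({..<d} \<times> {..<D}) (\<lambda>_. {0,1::'a})"
      define Pd where "Pd \<delta> i = (\<Sum>t<D. monom (\<delta> (i,t)) t)" for \<delta> :: "nat \<times> nat \<Rightarrow> 'a" and i
      have coPd: "coeff (Pd \<delta> i) t = (if t < D then \<delta> (i,t) else 0)" for \<delta> i t
        unfolding Pd_def by (simp add: coeff_sum coeff_monom)
      define h where "h \<delta> = restrict (\<lambda>i. poly (Pd \<delta> i) \<alpha> - poly (Pd \<delta> j) \<alpha> * a' i) ({..<d} - {j})"
        for \<delta>
      have notinj: "\<not> inj_on h Dom"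
      proof
        assume inj: "inj_on h Dom"
        have "h ` Dom \<subseteq> PiE ({..<d} - {j}) (\<lambda>_. UNIV)" unfolding h_def
          by (intro image_subsetI) (simp add: restrict_PiE_iff)
        hence "card Dom \<le> card (PiE ({..<d} - {j}) (\<lambda>_. UNIV :: 'a set))"
          using card_inj_on_le[OF inj] by (simp add: finite_PiE)
        also have "\<dots> = (2 ^ T) ^ (d - 1)" using card j by (simp add: card_PiE)
        also have "\<dots> = 2 ^ (T * (d - 1))" by (simp add: power_mult)
        finally have le: "card Dom \<le> 2 ^ (T * (d - 1))" .
        have "card Dom = 2 ^ (d * D)" unfolding Dom_def
          by (simp add: card_PiE card_cartesian_product numeral_2_eq_2)
        moreover have "T * (d - 1) < d * D"
        proof -
          have "D + \<nu> = T" unfolding D_def using nuT by simp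
          hence e1: "d * D + d * \<nu> = d * T" by (simp add: add_mult_distrib2[symmetric])
          obtain d' where "d = Suc d'" using j(1) by (cases d) auto
          hence e2: "T * (d - 1) + T = d * T" by (simp add: algebra_simps)
          show ?thesis using e1 e2 dnu by linarith
        qed
        ultimately have "2 ^ (T * (d - 1)) < card Dom" by simp
        with le show False by simp
      qed
      then obtain \<delta>1 \<delta>2 where dd: "\<delta>1 \<in> Dom" "\<delta>2 \<in> Dom" "\<delta>1 \<noteq> \<delta>2" "h \<delta>1 = h \<delta>2"
        unfolding inj_on_def by blast
      define b where "b i = Pd \<delta>1 i - Pd \<delta>2 i" for i
      have cob: "coeff (b i) t = (if t < D then \<delta>1 (i,t) - \<delta>2 (i,t) else 0)" for i t
        unfolding b_def by (simp add: coPd)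
      have bB: "inB (b i)" if "i < d" for i
      proof -
        have "inB (Pd \<delta> i)" if "\<delta> \<in> Dom" for \<delta>
          unfolding Pd_def using that \<open>i < d\<close>
          by (intro inB_sum[OF c2] inB_monom) (auto simp: Dom_def PiE_iff)
        thus ?thesis unfolding b_def using inB_diff[OF c2] dd by blast
      qed
      have bdeg: "degree (b i) \<le> D - 1" for i
        by (rule degree_le) (auto simp: cob)
      have bnz: "\<exists>i<d. \<exists>t. coeff (b i) t \<noteq> 0"
      proof -
        obtain x where x: "\<delta>1 x \<noteq> \<delta>2 x" using dd(3) by blast
        have "x \<in> {..<d} \<times> {..<D}"
          using x dd(1,2) unfolding Dom_def by (metis PiE_arb)
        then obtain i t where "x = (i,t)" "i < d" "t < D" by auto
        thus ?thesis using x cob by (metis eq_iff_diff_eq_0)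
      qed
      define lam where "lam = poly (b j) \<alpha>"
      have beval: "poly (b i) \<alpha> = lam * a' i" if "i < d" for i
      proof (cases "i = j")
        case True then show ?thesis using a'j unfolding lam_def by simp
      next
        case False
        hence "i \<in> {..<d} - {j}" using that by simp
        hence "h \<delta>1 i = h \<delta>2 i" using dd(4) by simp
        hence "poly (Pd \<delta>1 i) \<alpha> - poly (Pd \<delta>1 j) \<alpha> * a' i = poly (Pd \<delta>2 i) \<alpha> - poly (Pd \<delta>2 j) \<alpha> * a' i"
          unfolding h_def using \<open>i \<in> {..<d} - {j}\<close> by simp
        thus ?thesis unfolding lam_def b_def by (simp add: algebra_simps)
      qed
      define S where "S k = (\<Sum>i<d. b i * P i k)" for k
      have S0: "S k = 0" if k: "k < Mt" for k
      proof (rule ccontr)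
        assume nz: "S k \<noteq> 0"
        have "poly (S k) \<alpha> = (\<Sum>i<d. lam * (a' i * g i k))"
          unfolding S_def poly_sum using beval P k by (auto intro!: sum.cong)
        also have "\<dots> = 0" using a'sol[OF k] by (simp add: sum_distrib_left[symmetric])
        finally have ev: "poly (S k) \<alpha> = 0" .
        have SB: "inB (S k)" unfolding S_def using bB P k
          by (intro inB_sum[OF c2] inB_mult[OF c2]) auto
        have "degree (S k) \<le> T - 1"
        proof (rule degree_le, intro allI impI)
          fix n assume n: "T - 1 < n"
          have "coeff (b i * P i k) n = 0" if "i < d" for i
          proof (rule coeff_eq_0)
            have "degree (b i * P i k) \<le> degree (b i) + degree (P i k)" by (rule degree_mult_le)
            also have "\<dots> \<le> D - 1 + \<nu>" using bdeg P[OF that k] by (intro add_mono) auto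
            finally show "degree (b i * P i k) < n" using n D1 unfolding D_def by linarith
          qed
          thus "coeff (S k) n = 0" unfolding S_def coeff_sum by simp
        qed
        moreover have "T \<le> degree (S k)" by (rule claimE[OF c2 card prim SB nz ev])
        ultimately show False using T1 by linarith
      qed
      define m where "m = (LEAST t. \<exists>i<d. coeff (b i) t \<noteq> 0)"
      have m1: "\<exists>i<d. coeff (b i) m \<noteq> 0"
      proof -
        obtain i0 t0 where "i0 < d" "coeff (b i0) t0 \<noteq> 0" using bnz by blast
        hence "\<exists>i<d. coeff (b i) t0 \<noteq> 0" by blast
        thus ?thesis unfolding m_def by (rule LeastI)
      qed
      have m2: "coeff (b i) t = 0" if "t < m" "i < d" for i t
        using not_less_Least[of t "\<lambda>t. \<exists>i<d. coeff (b i) t \<noteq> 0"] that unfolding m_def by blast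
      have "\<forall>k<Mt. (\<Sum>i<d. coeff (b i) m * Phi \<nu> \<alpha> (g i) k) = 0"
      proof (intro allI impI)
        fix k assume k: "k < Mt"
        have "coeff (b i * P i k) m = coeff (b i) m * Phi \<nu> \<alpha> (g i) k" if "i < d" for i
        proof -
          have "coeff (b i * P i k) m = (\<Sum>s<Suc m. coeff (b i) s * coeff (P i k) (m - s))"
            unfolding coeff_mult lessThan_Suc_atMost ..
          also have "\<dots> = (\<Sum>s<m. coeff (b i) s * coeff (P i k) (m - s)) + coeff (b i) m * coeff (P i k) 0"
            by simp
          also have "(\<Sum>s<m. coeff (b i) s * coeff (P i k) (m - s)) = 0"
            using m2 that by simp
          finally show ?thesis using PhiP[OF that k] by simp
        qed
        hence "coeff (S k) m = (\<Sum>i<d. coeff (b i) m * Phi \<nu> \<alpha> (g i) k)"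
          unfolding S_def coeff_sum by simp
        thus "(\<Sum>i<d. coeff (b i) m * Phi \<nu> \<alpha> (g i) k) = 0" using S0[OF k] by simp
      qed
      moreover have "\<forall>i<d. coeff (b i) m \<in> {0,1}" using bB unfolding inB_def by auto
      ultimately have "\<forall>i<d. coeff (b i) m = 0"
        by (rule spec_ind[of "\<lambda>i. coeff (b i) m"])
      thus False using m1 by auto
    qed
  qed
qed

end
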